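(* Let $S\subseteq S_n$ be a sharply transitive set of permutations and let $L$ be the latin square whose rows are the permutations in $S$ (row corresponding to $\sigma\in S$ having entry $\sigma(i)$ in column $i$). Then $\mathrm{cr}(S)\le n-1$, with equality if and only if $L$ has a transversal.
   Context: $S_n$ is the symmetric group on $\{1,\dots,n\}$ with the Hamming distance: the distance between $g,h\in S_n$ is the number of points $i$ with $g(i)\ne h(i)$. The covering radius $\mathrm{cr}(P)$ of a nonempty $P\subseteq S_n$ is the smallest $r$ such that every permutation in $S_n$ is at distance at most $r$ from some element of $P$. A set $S\subseteq S_n$ is sharply transitive if for all $i,j\in\{1,\dots,n\}$ there is exactly one $\sigma\in S$ with $\sigma(i)=j$; its permutations then form the rows of a latin square of order $n$. A transversal of a latin square of order $n$ is a set of $n$ cells, one from each row and one from each column, no two containing the same symbol. *)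

theory Defs
  imports "HOL-Combinatorics.Permutations"
begin

definition Sym :: "nat \<Rightarrow> (nat \<Rightarrow> nat) set" where
  "Sym n = {\<sigma>. \<sigma> permutes {1..n}}"

definition hamming :: "nat \<Rightarrow> (nat \<Rightarrow> nat) \<Rightarrow> (nat \<Rightarrow> nat) \<Rightarrow> nat" where
  "hamming n g h = card {i \<in> {1..n}. g i \<noteq> h i}"

definition covering_radius :: "nat \<Rightarrow> (nat \<Rightarrow> nat) set \<Rightarrow> nat" where
  "covering_radius n P = (LEAST r. \<forall>g\<in>Sym n. \<exists>p\<in>P. hamming n g p \<le> r)"

definition sharply_transitive :: "nat \<Rightarrow> (nat \<Rightarrow> nat) set \<Rightarrow> bool" where
  "sharply_transitive n S \<longleftrightarrow> (\<forall>i\<in>{1..n}. \<forall>j\<in>{1..n}. \<exists>!\<sigma>. \<sigma> \<in> S \<and> \<sigma> i = j)"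

text \<open>The latin square L with rows indexed by \<sigma> \<in> S, columns i \<in> {1..n}, and entry
  \<sigma> i in cell (\<sigma>, i).\<close>
definition has_transversal :: "nat \<Rightarrow> (nat \<Rightarrow> nat) set \<Rightarrow> bool" where
  "has_transversal n S \<longleftrightarrow>
     (\<exists>T. T \<subseteq> S \<times> {1..n} \<and> card T = n \<and>
          (\<forall>\<sigma>\<in>S. \<exists>!i. (\<sigma>, i) \<in> T) \<and>
          (\<forall>i\<in>{1..n}. \<exists>!\<sigma>. (\<sigma>, i) \<in> T) \<and>
          inj_on (\<lambda>(\<sigma>, i). \<sigma> i) T)"

end

theory Submission
  imports Defs
begin

lemma ham_eq: "hamming n g p = n - card {i\<in>{1..n}. g i = p i}"
proof -
  have e: "{1..n} = {i\<in>{1..n}. g i \<noteq> p i} \<union> {i\<in>{1..n}. g i = p i}" by auto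
  have "card {1..n} = card {i\<in>{1..n}. g i \<noteq> p i} + card {i\<in>{1..n}. g i = p i}"
    by (subst e, rule card_Un_disjoint) auto
  then show ?thesis unfolding hamming_def by simp
qed

lemma ag_le: "card {i\<in>{1..n}. g i = p i} \<le> n"
proof -
  have "card {i\<in>{1..n}. g i = p i} \<le> card {1..n}" by (rule card_mono) auto
  then show ?thesis by simp
qed

lemma finS: "S \<subseteq> Sym n \<Longrightarrow> finite S"
  unfolding Sym_def by (rule finite_subset, assumption, rule finite_permutations) simp

lemma Sym_in: "\<sigma> \<in> Sym n \<Longrightarrow> i \<in> {1..n} \<Longrightarrow> \<sigma> i \<in> {1..n}"
  unfolding Sym_def by (metis mem_Collect_eq permutes_in_image)

lemma card_filter_sum: "finite I \<Longrightarrow> card {i\<in>I. P i} = (\<Sum>i\<in>I. if P i then 1 else 0)"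
  using sum.inter_filter[of I "\<lambda>_. 1::nat" P] by simp

lemma sumA:
  assumes st: "sharply_transitive n S" and sub: "S \<subseteq> Sym n" and g: "g \<in> Sym n"
  shows "(\<Sum>\<sigma>\<in>S. card {i\<in>{1..n}. g i = \<sigma> i}) = n"
proof -
  have fin: "finite S" using sub by (rule finS)
  have "(\<Sum>\<sigma>\<in>S. card {i\<in>{1..n}. g i = \<sigma> i})
      = (\<Sum>\<sigma>\<in>S. \<Sum>i\<in>{1..n}. if g i = \<sigma> i then 1 else 0)"
    by (rule sum.cong[OF refl], rule card_filter_sum, simp)
  also have "\<dots> = (\<Sum>i\<in>{1..n}. \<Sum>\<sigma>\<in>S. if g i = \<sigma> i then 1 else 0)"
    by (rule sum.swap)
  also have "\<dots> = (\<Sum>i\<in>{1..n}. (1::nat))"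
  proof (rule sum.cong)
    fix i assume i: "i \<in> {1..n}"
    have gi: "g i \<in> {1..n}" using Sym_in[OF g i] .
    from st i gi obtain s where s: "s \<in> S" "s i = g i" and u: "\<And>t. t \<in> S \<Longrightarrow> t i = g i \<Longrightarrow> t = s"
      unfolding sharply_transitive_def by metis
    have "{\<sigma>\<in>S. g i = \<sigma> i} = {s}"
    proof
      show "{\<sigma>\<in>S. g i = \<sigma> i} \<subseteq> {s}"
      proof
        fix t assume "t \<in> {\<sigma>\<in>S. g i = \<sigma> i}"
        then have "t \<in> S" "t i = g i" by auto
        then have "t = s" by (rule u)
        then show "t \<in> {s}" by simp
      qed
      show "{s} \<subseteq> {\<sigma>\<in>S. g i = \<sigma> i}" using s by simp
    qed
    then have c1: "card {\<sigma>\<in>S. g i = \<sigma> i} = 1" by simp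
    have "card {\<sigma>\<in>S. g i = \<sigma> i} = (\<Sum>\<sigma>\<in>S. if g i = \<sigma> i then 1 else 0)"
      by (rule card_filter_sum[OF fin])
    with c1 show "(\<Sum>\<sigma>\<in>S. if g i = \<sigma> i then 1 else 0) = (1::nat)" by simp
  qed simp
  finally show ?thesis by simp
qed

theorem theorem6p2:
  fixes n :: nat and S :: "(nat \<Rightarrow> nat) set"
  assumes "n \<ge> 1"
    and "S \<subseteq> Sym n"
    and "sharply_transitive n S"
  shows "covering_radius n S \<le> n - 1 \<and>
         (covering_radius n S = n - 1 \<longleftrightarrow> has_transversal n S)"
proof -
  note n1 = assms(1) and sub = assms(2) and st = assms(3)
  define ag where "ag g p = card {i\<in>{1..n}. g i = p i}" for g p :: "nat \<Rightarrow> nat"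
  define P where "P r = (\<forall>g\<in>Sym n. \<exists>p\<in>S. hamming n g p \<le> r)" for r
  have cr: "covering_radius n S = (LEAST r. P r)" unfolding covering_radius_def P_def ..
  have fin: "finite S" using sub by (rule finS)
  have Pn: "P (n - 1)" unfolding P_def
  proof
    fix g assume g: "g \<in> Sym n"
    have s: "(\<Sum>\<sigma>\<in>S. ag g \<sigma>) = n" unfolding ag_def using sumA[OF st sub g] .
    have "\<exists>p\<in>S. ag g p \<noteq> 0"
    proof (rule ccontr)
      assume "\<not> ?thesis"
      then have "(\<Sum>\<sigma>\<in>S. ag g \<sigma>) = 0" by simp
      with s n1 show False by simp
    qed
    then obtain p where "p \<in> S" "ag g p \<noteq> 0" by blast
    moreover have "hamming n g p = n - ag g p" by (simp add: ham_eq ag_def)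
    ultimately show "\<exists>p\<in>S. hamming n g p \<le> n - 1"
      by (intro bexI[of _ p]) auto
  qed
  have le: "covering_radius n S \<le> n - 1" unfolding cr using Pn by (rule Least_le)
  have Pcr: "P (covering_radius n S)" unfolding cr using Pn by (rule LeastI)
  have step2: "covering_radius n S = n - 1 \<longleftrightarrow> (\<exists>g\<in>Sym n. \<forall>\<sigma>\<in>S. ag g \<sigma> \<le> 1)"
  proof
    assume eq: "covering_radius n S = n - 1"
    show "\<exists>g\<in>Sym n. \<forall>\<sigma>\<in>S. ag g \<sigma> \<le> 1"
    proof (cases "n = 1")
      case True
      have "id \<in> Sym n" unfolding Sym_def by simp
      then show ?thesis using ag_le[of n] True unfolding ag_def by blast
    next
      case False
      have "n - 2 < (LEAST r. P r)" using eq False n1 cr by simp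
      then have "\<not> P (n - 2)" by (rule not_less_Least)
      then obtain g where g: "g \<in> Sym n" and h: "\<forall>p\<in>S. \<not> hamming n g p \<le> n - 2"
        unfolding P_def by blast
      have "\<forall>\<sigma>\<in>S. ag g \<sigma> \<le> 1"
      proof
        fix \<sigma> assume "\<sigma> \<in> S"
        with h have "\<not> n - ag g \<sigma> \<le> n - 2" by (simp add: ham_eq ag_def)
        then show "ag g \<sigma> \<le> 1" by linarith
      qed
      with g show ?thesis by blast
    qed
  next
    assume "\<exists>g\<in>Sym n. \<forall>\<sigma>\<in>S. ag g \<sigma> \<le> 1"
    then obtain g where g: "g \<in> Sym n" and h: "\<forall>\<sigma>\<in>S. ag g \<sigma> \<le> 1" by blast
    from Pcr g obtain p where p: "p \<in> S" "hamming n g p \<le> covering_radius n S"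
      unfolding P_def by blast
    have "ag g p \<le> 1" using h p(1) by blast
    moreover have "hamming n g p = n - ag g p" by (simp add: ham_eq ag_def)
    ultimately have "n - 1 \<le> hamming n g p" by linarith
    with p le show "covering_radius n S = n - 1" by linarith
  qed
  have cardS: "card S \<le> n"
  proof -
    have "inj_on (\<lambda>\<sigma>. \<sigma> 1) S"
    proof (rule inj_onI)
      fix s t assume s: "s \<in> S" and t: "t \<in> S" and e: "s 1 = t 1"
      have "1 \<in> {1..n}" using n1 by simp
      moreover have "s 1 \<in> {1..n}" using Sym_in[of s n 1] s sub n1 by auto
      ultimately have "\<exists>!\<sigma>. \<sigma> \<in> S \<and> \<sigma> 1 = s 1" using st unfolding sharply_transitive_def by blast
      then show "s = t" using s t e by metis
    qed
    moreover have "(\<lambda>\<sigma>. \<sigma> 1) ` S \<subseteq> {1..n}" using Sym_in[of _ n 1] sub n1 by auto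
    ultimately have "card S \<le> card {1..n}" by (rule card_inj_on_le) simp
    then show ?thesis by simp
  qed
  have step3: "(\<exists>g\<in>Sym n. \<forall>\<sigma>\<in>S. ag g \<sigma> \<le> 1) \<longleftrightarrow> has_transversal n S"
  proof
    assume "\<exists>g\<in>Sym n. \<forall>\<sigma>\<in>S. ag g \<sigma> \<le> 1"
    then obtain g where g: "g \<in> Sym n" and h: "\<forall>\<sigma>\<in>S. ag g \<sigma> \<le> 1" by blast
    have s: "(\<Sum>\<sigma>\<in>S. ag g \<sigma>) = n" unfolding ag_def using sumA[OF st sub g] .
    have one: "ag g \<sigma> = 1" if \<sigma>: "\<sigma> \<in> S" for \<sigma>
    proof (rule ccontr)
      assume "ag g \<sigma> \<noteq> 1"
      moreover have "ag g \<sigma> \<le> 1" using h \<sigma> by blast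
      ultimately have z: "ag g \<sigma> = 0" by linarith
      have "(\<Sum>\<sigma>\<in>S. ag g \<sigma>) = ag g \<sigma> + (\<Sum>\<tau>\<in>S - {\<sigma>}. ag g \<tau>)"
        using fin \<sigma> by (rule sum.remove)
      also have "\<dots> = (\<Sum>\<tau>\<in>S - {\<sigma>}. ag g \<tau>)" using z by simp
      also have "\<dots> \<le> (\<Sum>\<tau>\<in>S - {\<sigma>}. 1)"
        by (rule sum_mono) (use h in blast)
      also have "\<dots> = card S - 1" using fin \<sigma> by simp
      finally show False using s cardS n1 by linarith
    qed
    define T where "T = {(\<sigma>, i). \<sigma> \<in> S \<and> i \<in> {1..n} \<and> \<sigma> i = g i}"
    have row: "\<exists>!i. (\<sigma>, i) \<in> T" if \<sigma>: "\<sigma> \<in> S" for \<sigma>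
    proof -
      have "card {i\<in>{1..n}. g i = \<sigma> i} = 1" using one[OF \<sigma>] unfolding ag_def .
      then obtain i0 where e: "{i\<in>{1..n}. g i = \<sigma> i} = {i0}" by (rule card_1_singletonE)
      have a: "i0 \<in> {1..n}" "g i0 = \<sigma> i0" using e by blast+
      have c: "j = i0" if "j \<in> {1..n}" "g j = \<sigma> j" for j
      proof -
        have "j \<in> {i\<in>{1..n}. g i = \<sigma> i}" using that by simp
        then show ?thesis by (metis e singletonD)
      qed
      show ?thesis
      proof (rule ex1I[of _ i0])
        show "(\<sigma>, i0) \<in> T" unfolding T_def using \<sigma> a by simp
      next
        fix j assume "(\<sigma>, j) \<in> T"
        then have "j \<in> {1..n}" "g j = \<sigma> j" unfolding T_def by auto
        then show "j = i0" by (rule c)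
      qed
    qed
    have col: "\<exists>!\<sigma>. (\<sigma>, i) \<in> T" if i: "i \<in> {1..n}" for i
    proof -
      have "g i \<in> {1..n}" using Sym_in[OF g i] .
      with st i have "\<exists>!\<sigma>. \<sigma> \<in> S \<and> \<sigma> i = g i" unfolding sharply_transitive_def by blast
      then show ?thesis unfolding T_def using i by auto
    qed
    have ginj: "inj g" using g unfolding Sym_def by (simp add: permutes_inj)
    have inj: "inj_on (\<lambda>(\<sigma>, i). \<sigma> i) T"
    proof (rule inj_onI, clarify)
      fix s i t j assume a: "(s, i) \<in> T" "(t, j) \<in> T" "s i = t j"
      then have "g i = g j" unfolding T_def by auto
      with ginj have ij: "i = j" by (simp add: inj_eq)
      have "i \<in> {1..n}" using a unfolding T_def by auto
      from col[OF this] a ij show "s = t \<and> i = j" by auto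
    qed
    have bij: "bij_betw snd T {1..n}"
    proof (rule bij_betwI')
      fix x y assume xy: "x \<in> T" "y \<in> T"
      obtain s i t j where x: "x = (s, i)" and y: "y = (t, j)" by (cases x, cases y)
      have "s = t" if ij: "i = j"
      proof -
        have "i \<in> {1..n}" using xy x unfolding T_def by auto
        from col[OF this] xy x y ij show "s = t" by auto
      qed
      then show "(snd x = snd y) = (x = y)" using x y by auto
    next
      fix x assume "x \<in> T" then show "snd x \<in> {1..n}" unfolding T_def by auto
    next
      fix i assume "i \<in> {1..n}"
      then obtain s where "(s, i) \<in> T" using col by blast
      then show "\<exists>x\<in>T. i = snd x" by force
    qed
    have "card T = n" using bij_betw_same_card[OF bij] by simp
    moreover have "T \<subseteq> S \<times> {1..n}" unfolding T_def by auto
    ultimately show "has_transversal n S" unfolding has_transversal_def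
    proof (intro exI[of _ T] conjI)
      show "\<forall>\<sigma>\<in>S. \<exists>!i. (\<sigma>, i) \<in> T" using row by blast
      show "\<forall>i\<in>{1..n}. \<exists>!\<sigma>. (\<sigma>, i) \<in> T" using col by blast
      show "inj_on (\<lambda>(\<sigma>, i). \<sigma> i) T" by (rule inj)
    qed
  next
    assume "has_transversal n S"
    then obtain T where Tsub: "T \<subseteq> S \<times> {1..n}"
      and row: "\<forall>\<sigma>\<in>S. \<exists>!i. (\<sigma>, i) \<in> T"
      and col: "\<forall>i\<in>{1..n}. \<exists>!\<sigma>. (\<sigma>, i) \<in> T"
      and inj: "inj_on (\<lambda>(\<sigma>, i). \<sigma> i) T" unfolding has_transversal_def by blast
    define c where "c i = (THE \<sigma>. (\<sigma>, i) \<in> T)" for i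
    have cT: "(c i, i) \<in> T" if "i \<in> {1..n}" for i
      unfolding c_def using col that by (metis theI')
    have cS: "c i \<in> S" if "i \<in> {1..n}" for i using cT[OF that] Tsub by auto
    define g where "g i = (if i \<in> {1..n} then c i i else i)" for i
    have gin: "g i \<in> {1..n}" if i: "i \<in> {1..n}" for i
      using Sym_in[of "c i" n i] cS[OF i] sub i unfolding g_def by auto
    have ginj: "inj_on g {1..n}"
    proof (rule inj_onI)
      fix i j assume i: "i \<in> {1..n}" and j: "j \<in> {1..n}" and e: "g i = g j"
      then have "(\<lambda>(\<sigma>, i). \<sigma> i) (c i, i) = (\<lambda>(\<sigma>, i). \<sigma> i) (c j, j)" unfolding g_def by simp
      from inj_onD[OF inj this cT[OF i] cT[OF j]] show "i = j" by simp
    qed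
    have "g ` {1..n} \<subseteq> {1..n}" using gin by blast
    then have "g ` {1..n} = {1..n}" using endo_inj_surj[of "{1..n}" g] ginj by blast
    then have "bij_betw g {1..n} {1..n}" using ginj by (simp add: bij_betw_def)
    then have gp: "g permutes {1..n}" by (rule bij_imp_permutes) (auto simp: g_def)
    then have gS: "g \<in> Sym n" unfolding Sym_def by simp
    have "\<forall>\<sigma>\<in>S. ag g \<sigma> \<le> 1"
    proof
      fix \<sigma> assume \<sigma>: "\<sigma> \<in> S"
      then obtain i0 where i0: "(\<sigma>, i0) \<in> T" using row by blast
      have "{i\<in>{1..n}. g i = \<sigma> i} \<subseteq> {i0}"
      proof
        fix j assume "j \<in> {i\<in>{1..n}. g i = \<sigma> i}"
        then have j: "j \<in> {1..n}" and e: "c j j = \<sigma> j" unfolding g_def by auto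
        have "\<exists>!t. t \<in> S \<and> t j = c j j" using st j gin[OF j] unfolding sharply_transitive_def g_def
          using j by auto
        then have "\<sigma> = c j" using \<sigma> cS[OF j] e by metis
        then have "(\<sigma>, j) \<in> T" using cT[OF j] by simp
        then show "j \<in> {i0}" using row \<sigma> i0 by blast
      qed
      then have "card {i\<in>{1..n}. g i = \<sigma> i} \<le> card {i0}" by (rule card_mono[rotated]) simp
      then show "ag g \<sigma> \<le> 1" unfolding ag_def by simp
    qed
    with gS show "\<exists>g\<in>Sym n. \<forall>\<sigma>\<in>S. ag g \<sigma> \<le> 1" by blast
  qed
  show ?thesis using le step2 step3 by blast
qed

end
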